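(* Let $\theta<\kappa$ be a regular cardinal and let $I$ be a weakly $\theta$-saturated, $\theta$-indecomposable ideal on the cardinal $\kappa$. If $\delta$ is an ordinal of cofinality $\theta$, then every function $f:\kappa\to\delta$ is bounded below $\delta$ almost everywhere: there is $\beta<\delta$ with $\{\alpha<\kappa:f(\alpha)\geq\beta\}\in I$.
   Context: By an ideal on a cardinal $\kappa$ we mean a proper ideal on $\kappa$ containing all bounded subsets of $\kappa$. $I$ is weakly $\theta$-saturated if there is no partition of $\kappa$ into $\theta$ pairwise disjoint sets not in $I$. $I$ is $\theta$-indecomposable if whenever $\langle A_i:i<\theta\rangle$ are subsets of $\kappa$ with $\bigcup_{i<\theta}A_i\notin I$, there is $w\subseteq\theta$ with $|w|<\theta$ and $\bigcup_{i\in w}A_i\notin I$. *)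

theory Defs
  imports Main
begin

unbundle cardinal_syntax

(* A cardinal kappa is a cardinal order k (Card_order k) with carrier Field k.
   Ordinals are well-orders (non-strict relations). *)

definition bounded_in :: "'a rel \<Rightarrow> 'a set \<Rightarrow> bool" where
  "bounded_in k A \<longleftrightarrow> A \<subseteq> Field k \<and>
     (\<exists>\<gamma>\<in>Field k. \<forall>\<alpha>\<in>A. (\<alpha>, \<gamma>) \<in> k \<and> \<alpha> \<noteq> \<gamma>)"

definition is_ideal_on :: "'a rel \<Rightarrow> 'a set set \<Rightarrow> bool" where
  "is_ideal_on k I \<longleftrightarrow>
     I \<subseteq> Pow (Field k) \<and>
     Field k \<notin> I \<and>
     (\<forall>A\<in>I. \<forall>B. B \<subseteq> A \<longrightarrow> B \<in> I) \<and>
     (\<forall>A\<in>I. \<forall>B\<in>I. A \<union> B \<in> I) \<and>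
     (\<forall>A. bounded_in k A \<longrightarrow> A \<in> I)"

definition weakly_saturated :: "'a rel \<Rightarrow> 'c rel \<Rightarrow> 'a set set \<Rightarrow> bool" where
  "weakly_saturated k t I \<longleftrightarrow>
     \<not> (\<exists>A :: 'c \<Rightarrow> 'a set.
          (\<Union>i\<in>Field t. A i) = Field k \<and>
          (\<forall>i\<in>Field t. \<forall>j\<in>Field t. i \<noteq> j \<longrightarrow> A i \<inter> A j = {}) \<and>
          (\<forall>i\<in>Field t. A i \<notin> I))"

definition indecomposable :: "'a rel \<Rightarrow> 'c rel \<Rightarrow> 'a set set \<Rightarrow> bool" where
  "indecomposable k t I \<longleftrightarrow>
     (\<forall>A :: 'c \<Rightarrow> 'a set.
        (\<forall>i\<in>Field t. A i \<subseteq> Field k) \<longrightarrow> (\<Union>i\<in>Field t. A i) \<notin> I \<longrightarrow>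
        (\<exists>w \<subseteq> Field t. |w| <o |Field t| \<and> (\<Union>i\<in>w. A i) \<notin> I))"

definition cofinal_in :: "'d set \<Rightarrow> 'd rel \<Rightarrow> bool" where
  "cofinal_in C d \<longleftrightarrow> C \<subseteq> Field d \<and> (\<forall>x\<in>Field d. \<exists>y\<in>C. (x, y) \<in> d)"

definition has_cofinality :: "'d rel \<Rightarrow> 'c rel \<Rightarrow> bool" where
  "has_cofinality d t \<longleftrightarrow>
     (\<exists>C. cofinal_in C d \<and> |C| =o |Field t| ) \<and>
     (\<forall>C. cofinal_in C d \<longrightarrow> |Field t| \<le>o |C| )"

end

theory Submission
  imports Defs
begin

theorem corollary2p3:
  fixes k :: "'a rel" and t :: "'c rel" and d :: "'d rel"
    and I :: "'a set set" and f :: "'a \<Rightarrow> 'd"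
  assumes "Card_order k"
    and "Card_order t" and "infinite (Field t)" and "regularCard t"
    and "|Field t| <o |Field k|"
    and "is_ideal_on k I"
    and "weakly_saturated k t I"
    and "indecomposable k t I"
    and "Well_order d" and "has_cofinality d t"
    and "\<forall>\<alpha>\<in>Field k. f \<alpha> \<in> Field d"
  shows "\<exists>\<beta>\<in>Field d. {\<alpha>\<in>Field k. (\<beta>, f \<alpha>) \<in> d} \<in> I"
proof (rule ccontr)
  assume contra: "\<not> ?thesis"
  note WO = assms(9)
  have lo: "Linear_order d" using WO unfolding well_order_on_def by (rule conjunct1)
  have po: "Partial_order d" using lo unfolding linear_order_on_def by (rule conjunct1)
  have trd: "trans d" using po unfolding partial_order_on_def preorder_on_def by simp
  have ad: "antisym d" using po unfolding partial_order_on_def by simp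
  have rd: "Refl d" using po unfolding partial_order_on_def preorder_on_def by simp
  have td: "Total d" using lo unfolding linear_order_on_def by simp
  have tr: "\<And>a b c. (a,b)\<in>d \<Longrightarrow> (b,c)\<in>d \<Longrightarrow> (a,c)\<in>d"
    using trd by (rule transD)
  have an: "\<And>a b. (a,b)\<in>d \<Longrightarrow> (b,a)\<in>d \<Longrightarrow> a=b"
    using ad by (rule antisymD)
  have tot: "\<And>a b. a\<in>Field d \<Longrightarrow> b\<in>Field d \<Longrightarrow> (a,b)\<in>d \<or> (b,a)\<in>d"
  proof -
    fix a b assume ab: "a\<in>Field d" "b\<in>Field d"
    show "(a,b)\<in>d \<or> (b,a)\<in>d"
    proof (cases "a = b")
      case True then show ?thesis using rd ab refl_onD by fastforce
    next
      case False then show ?thesis using td ab unfolding total_on_def by blast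
    qed
  qed
  have fd: "\<And>a b. (a,b)\<in>d \<Longrightarrow> a \<in> Field d \<and> b \<in> Field d"
    by (auto simp: Field_def)
  have idl: "I \<subseteq> Pow (Field k)" "\<And>A B. A \<in> I \<Longrightarrow> B \<subseteq> A \<Longrightarrow> B \<in> I"
    using assms(6) unfolding is_ideal_on_def by blast+
  have Fk: "Field k \<noteq> {}"
  proof
    assume "Field k = {}"
    then have "|Field k| \<le>o |Field t|" by (simp add: card_of_empty)
    then show False using not_ordLess_ordLeq[OF assms(5)] by blast
  qed
  have emp: "{} \<in> I" using assms(6) Fk unfolding is_ideal_on_def bounded_in_def by blast
  have Fd: "Field d \<noteq> {}" using Fk assms(11) by blast
  have bnd: "\<exists>x\<in>Field d. \<forall>y\<in>B. (y,x)\<in>d \<and> y \<noteq> x"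
    if B: "B \<subseteq> Field d" "|B| <o |Field t|" for B
  proof -
    have "\<not> cofinal_in B d"
    proof
      assume "cofinal_in B d"
      then have "|Field t| \<le>o |B|" using assms(10) unfolding has_cofinality_def by blast
      then show False using not_ordLess_ordLeq[OF B(2)] by blast
    qed
    then obtain x where x: "x \<in> Field d" "\<forall>y\<in>B. (x,y) \<notin> d"
      using B(1) unfolding cofinal_in_def by blast
    show ?thesis
    proof (intro bexI[OF _ x(1)] ballI)
      fix y assume "y \<in> B"
      then have yd: "y \<in> Field d" "(x,y) \<notin> d" using x(2) B(1) by auto
      have "(x,y)\<in>d \<or> (y,x)\<in>d" using tot[OF x(1) yd(1)] .
      then have "(y,x)\<in>d" using yd(2) by simp
      moreover have "y \<noteq> x"
      proof
        assume "y = x"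
        then show False using yd tot[OF x(1) x(1)] by simp
      qed
      ultimately show "(y,x)\<in>d \<and> y \<noteq> x" by simp
    qed
  qed
  obtain C where C: "cofinal_in C d" "|C| =o |Field t|"
    using assms(10) unfolding has_cofinality_def by blast
  have Cne: "C \<noteq> {}" using C(1) Fd unfolding cofinal_in_def by blast
  have "|C| \<le>o |Field t|" using C(2) ordIso_iff_ordLeq by blast
  then obtain h where h: "h ` Field t = C" using card_of_ordLeq2[OF Cne, of "Field t"] by (elim iffD2[THEN exE]) simp
  define Iv where "Iv = (\<lambda>b x. {\<alpha>\<in>Field k. (b, f \<alpha>)\<in>d \<and> (f \<alpha>, x)\<in>d \<and> f \<alpha> \<noteq> x})"
  have step: "\<exists>x\<in>Field d. Iv b x \<notin> I" if b: "b \<in> Field d" for b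
  proof -
    define T where "T = {\<alpha>\<in>Field k. (b, f \<alpha>) \<in> d}"
    have T: "T \<notin> I" using contra b unfolding T_def by blast
    define A where "A = (\<lambda>i. {\<alpha>\<in>T. (f \<alpha>, h i) \<in> d})"
    have "(\<Union>i\<in>Field t. A i) = T"
    proof
      show "T \<subseteq> (\<Union>i\<in>Field t. A i)"
      proof
        fix \<alpha> assume a: "\<alpha> \<in> T"
        then have "f \<alpha> \<in> Field d" using assms(11) unfolding T_def by blast
        then obtain y where "y \<in> C" "(f \<alpha>, y) \<in> d" using C(1) unfolding cofinal_in_def by blast
        then show "\<alpha> \<in> (\<Union>i\<in>Field t. A i)" using h a unfolding A_def by blast
      qed
    qed (auto simp: A_def)
    moreover have "\<forall>i\<in>Field t. A i \<subseteq> Field k" unfolding A_def T_def by blast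
    ultimately have "\<exists>w \<subseteq> Field t. |w| <o |Field t| \<and> (\<Union>i\<in>w. A i) \<notin> I"
      using assms(8) T unfolding indecomposable_def by simp
    then obtain w where w: "w \<subseteq> Field t" "|w| <o |Field t|" "(\<Union>i\<in>w. A i) \<notin> I"
      by blast
    have hw: "h ` w \<subseteq> Field d" using h w(1) C(1) unfolding cofinal_in_def by blast
    have hw2: "|h ` w| <o |Field t|" by (rule ordLeq_ordLess_trans[OF card_of_image w(2)])
    obtain x where x: "x\<in>Field d" "\<forall>y\<in>h ` w. (y,x)\<in>d \<and> y \<noteq> x" using bnd[OF hw hw2] by blast
    have "(\<Union>i\<in>w. A i) \<subseteq> Iv b x"
    proof
      fix \<alpha> assume "\<alpha> \<in> (\<Union>i\<in>w. A i)"
      then obtain i where i: "i \<in> w" "\<alpha> \<in> T" "(f \<alpha>, h i) \<in> d" unfolding A_def by blast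
      have "(h i, x) \<in> d" "h i \<noteq> x" using x i(1) by auto
      then have fx: "(f \<alpha>, x) \<in> d" using tr i(3) by blast
      have "f \<alpha> \<noteq> x"
      proof
        assume "f \<alpha> = x"
        then have "(x, h i) \<in> d" using i(3) by simp
        then have "h i = x" using an \<open>(h i, x) \<in> d\<close> by blast
        then show False using \<open>h i \<noteq> x\<close> by simp
      qed
      note fx this
      then show "\<alpha> \<in> Iv b x" using i(2) unfolding Iv_def T_def by blast
    qed
    then have "Iv b x \<notin> I" using w(3) idl(2) by blast
    then show ?thesis using x(1) by blast
  qed
  define g where "g = (\<lambda>b. SOME x. x\<in>Field d \<and> Iv b x \<notin> I)"
  have g: "g b \<in> Field d" "Iv b (g b) \<notin> I" if "b \<in> Field d" for b
    using someI_ex[OF step[OF that, unfolded Bex_def]] unfolding g_def by blast+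
  have gl: "(b, g b) \<in> d \<and> b \<noteq> g b" if "b \<in> Field d" for b
  proof -
    have "Iv b (g b) \<noteq> {}" using g(2)[OF that] emp by auto
    then obtain \<alpha> where "(b, f \<alpha>)\<in>d" "(f \<alpha>, g b)\<in>d" "f \<alpha> \<noteq> g b" unfolding Iv_def by blast
    then show ?thesis using tr an by metis
  qed
  define F where "F = {S. S \<subseteq> Field d \<and> (\<forall>a\<in>S. \<forall>b\<in>S. (a,b)\<in>d \<and> a \<noteq> b \<longrightarrow> (g a, b) \<in> d)}"
  have "\<forall>Ch\<in>chains F. \<Union>Ch \<in> F"
  proof
    fix Ch assume ch: "Ch \<in> chains F"
    show "\<Union>Ch \<in> F" unfolding F_def
    proof (intro CollectI conjI ballI impI)
      show "\<Union>Ch \<subseteq> Field d" using ch unfolding chains_def F_def by blast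
    next
      fix a b assume a: "a \<in> \<Union>Ch" and b: "b \<in> \<Union>Ch" and ab: "(a,b)\<in>d \<and> a \<noteq> b"
      obtain A B where AB: "A \<in> Ch" "B \<in> Ch" "a \<in> A" "b \<in> B" using a b by blast
      have "A \<subseteq> B \<or> B \<subseteq> A" using ch AB unfolding chains_def chain_subset_def by blast
      then obtain S where "S \<in> Ch" "a \<in> S" "b \<in> S" using AB by blast
      then show "(g a, b) \<in> d" using ch ab unfolding chains_def F_def by blast
    qed
  qed
  then obtain S where S: "S \<in> F" and Smax: "\<forall>X\<in>F. S \<subseteq> X \<longrightarrow> X = S"
    using Zorn_Lemma by blast
  have SF: "S \<subseteq> Field d" "\<And>a b. a\<in>S \<Longrightarrow> b\<in>S \<Longrightarrow> (a,b)\<in>d \<Longrightarrow> a \<noteq> b \<Longrightarrow> (g a, b) \<in> d"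
    using S unfolding F_def by blast+
  have big: "|Field t| \<le>o |S|"
  proof (rule ccontr)
    assume "\<not> |Field t| \<le>o |S|"
    then have "|S| <o |Field t|" using ordLess_or_ordLeq[OF card_of_Well_order card_of_Well_order] by blast
    then have gs1: "|g ` S| <o |Field t|" by (rule ordLeq_ordLess_trans[OF card_of_image])
    have gs2: "g ` S \<subseteq> Field d" using g(1) SF(1) by blast
    obtain x where x: "x\<in>Field d" "\<forall>y\<in>g ` S. (y,x)\<in>d \<and> y \<noteq> x" using bnd[OF gs2 gs1] by blast
    have lt: "(a, x) \<in> d \<and> a \<noteq> x" if "a \<in> S" for a
    proof -
      have "(a, g a) \<in> d" "a \<noteq> g a" using gl SF(1) that by blast+
      moreover have "(g a, x) \<in> d" "g a \<noteq> x" using x that by auto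
      ultimately show ?thesis using tr an by metis
    qed
    have ins: "insert x S \<in> F" unfolding F_def
    proof (intro CollectI conjI ballI impI)
      show "insert x S \<subseteq> Field d" using x SF(1) by blast
    next
      fix a b assume a: "a \<in> insert x S" and b: "b \<in> insert x S" and ab: "(a,b)\<in>d \<and> a \<noteq> b"
      show "(g a, b) \<in> d"
      proof (cases "a = x")
        case True
        then have "b \<in> S" using ab b by blast
        then have "(b, x) \<in> d" "b \<noteq> x" using lt by blast+
        moreover have "(x, b) \<in> d" using ab True by simp
        ultimately show ?thesis using an by blast
      next
        case False
        then have aS: "a \<in> S" using a by blast
        show ?thesis
        proof (cases "b = x")
          case True then show ?thesis using x aS by auto
        next
          case False then show ?thesis using b aS ab SF(2) by blast
        qed
      qed
    qed
    have xS: "x \<notin> S"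
    proof
      assume "x \<in> S" then show False using lt[of x] by simp
    qed
    have "S \<subseteq> insert x S" by blast
    then have "insert x S = S" using Smax ins by blast
    then show False using xS by blast
  qed
  then obtain e where e: "inj_on e (Field t)" "e ` Field t \<subseteq> S" using iffD2[OF card_of_ordLeq big] by blast
  have nd: "Iv a (g a) \<inter> Iv b (g b) = {}" if ab: "(a,b)\<in>d" "a \<noteq> b" "a \<in> S" "b \<in> S" for a b
  proof (rule ccontr)
    assume "Iv a (g a) \<inter> Iv b (g b) \<noteq> {}"
    then obtain \<alpha> where "\<alpha> \<in> Iv a (g a)" "\<alpha> \<in> Iv b (g b)" by blast
    then have al: "(f \<alpha>, g a) \<in> d" "f \<alpha> \<noteq> g a" "(b, f \<alpha>) \<in> d" unfolding Iv_def by simp_all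
    have gab: "(g a, b) \<in> d" using SF(2)[OF ab(3) ab(4) ab(1) ab(2)] .
    have "(f \<alpha>, b) \<in> d" using tr[OF al(1) gab] .
    then have fb: "f \<alpha> = b" by (rule an[OF _ al(3)])
    then have "(g a, f \<alpha>) \<in> d" using gab by simp
    then have "f \<alpha> = g a" by (rule an[OF al(1)])
    then show False using al(2) by simp
  qed
  have disj: "Iv a (g a) \<inter> Iv b (g b) = {}" if "a \<in> S" "b \<in> S" "a \<noteq> b" for a b
  proof -
    have "(a,b)\<in>d \<or> (b,a)\<in>d" using tot SF(1) that by blast
    then show ?thesis
    proof
      assume "(a,b)\<in>d" then show ?thesis using nd[of a b] that by blast
    next
      assume "(b,a)\<in>d" then have "Iv b (g b) \<inter> Iv a (g a) = {}" using nd[of b a] that by blast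
      then show ?thesis by (simp add: Int_commute)
    qed
  qed
  obtain i0 where i0: "i0 \<in> Field t" using assms(3) by (metis ex_in_conv finite.emptyI)
  define P where "P = (\<lambda>i. if i = i0 then Field k - (\<Union>j\<in>Field t - {i0}. Iv (e j) (g (e j)))
                          else Iv (e i) (g (e i)))"
  have Ivk: "Iv b x \<subseteq> Field k" for b x unfolding Iv_def by blast
  have eS: "\<And>i. i \<in> Field t \<Longrightarrow> e i \<in> S" using e(2) by blast
  have disjP: "Iv (e i) (g (e i)) \<inter> Iv (e j) (g (e j)) = {}" if "i \<in> Field t" "j \<in> Field t" "i \<noteq> j" for i j
    using disj[OF eS[OF that(1)] eS[OF that(2)]] inj_onD[OF e(1)] that by blast
  have "\<exists>A :: 'c \<Rightarrow> 'a set.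
          (\<Union>i\<in>Field t. A i) = Field k \<and>
          (\<forall>i\<in>Field t. \<forall>j\<in>Field t. i \<noteq> j \<longrightarrow> A i \<inter> A j = {}) \<and>
          (\<forall>i\<in>Field t. A i \<notin> I)"
  proof (intro exI[of _ P] conjI ballI impI)
    show "(\<Union>i\<in>Field t. P i) = Field k"
    proof
      show "(\<Union>i\<in>Field t. P i) \<subseteq> Field k" using Ivk unfolding P_def by auto
      show "Field k \<subseteq> (\<Union>i\<in>Field t. P i)"
      proof
        fix \<alpha> assume "\<alpha> \<in> Field k"
        then show "\<alpha> \<in> (\<Union>i\<in>Field t. P i)" using i0 unfolding P_def
          by (cases "\<exists>j\<in>Field t - {i0}. \<alpha> \<in> Iv (e j) (g (e j))") auto
      qed
    qed
  next
    fix i j assume ij: "i \<in> Field t" "j \<in> Field t" "i \<noteq> j"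
    show "P i \<inter> P j = {}"
      using ij disjP[OF ij] unfolding P_def by auto
  next
    fix i assume i: "i \<in> Field t"
    have "Iv (e i) (g (e i)) \<notin> I" using g(2) SF(1) eS[OF i] by blast
    moreover have "Iv (e i) (g (e i)) \<subseteq> P i"
    proof (cases "i = i0")
      case True
      have "Iv (e i0) (g (e i0)) \<inter> Iv (e j) (g (e j)) = {}" if "j \<in> Field t - {i0}" for j
        using disjP[of i0 j] i0 that by blast
      then show ?thesis using True Ivk unfolding P_def by auto
    next
      case False then show ?thesis unfolding P_def by simp
    qed
    ultimately show "P i \<notin> I" using idl(2) by blast
  qed
  then show False using assms(7) unfolding weakly_saturated_def by blast
qed

end
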